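(* Let $\alpha>0$ and let $a_1,\dots,a_N,b_1,\dots,b_{N-1}$ be independent with $a_i\sim\mathcal N(0,\alpha)$, $b_i\ge0$, $b_i^2\sim\frac\alpha2\chi^2(2i/\alpha)$; let $c_i=(b_i^2-i)/\sqrt i$. Let $\theta_N=1+N^{-2/3}w_N$ with $w_N>0$, $(\log\log N)^2/w_N\to0$ and $w_N/(\log N)^2\to0$. For $1\le i\le N$ let $r_i=1+\sqrt{1-\frac{i-1}{N\theta_N^2}}$, $m_i=1-\sqrt{1-\frac{i-1}{N\theta_N^2}}$, $\gamma_i=m_i/r_i$; for $2\le i\le N$ let $\delta_i=\frac{m_i}{r_i}-\frac{m_i}{r_{i-1}}$; for $3\le i\le N$ let $\xi_i=\frac{a_i}{\sqrt N\theta_Nr_i}+\sqrt{\frac{m_i}{r_i}}\frac{c_{i-1}}{\sqrt N\theta_Nr_{i-1}}$, and let $L_2=0$, $L_i=\xi_i+\gamma_iL_{i-1}$. Then there exists $C>0$ such that for all $N$ and all $3\le i\le N$, \[ \Big|\gamma_i\frac{\mathbf E L_{i-1}^2}{\alpha}-\delta_i\Big|<\frac{C}{N^2(r_i-1)^4}. \]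
   Context: For $d>0$, $\chi^2(d)$ has density $\frac{1}{2^{d/2}\Gamma(d/2)}x^{d/2-1}e^{-x/2}\mathbf 1_{x>0}$. *)

theory Defs
  imports "HOL-Probability.Probability"
begin

definition chi2_density :: "real \<Rightarrow> real \<Rightarrow> real" where
  "chi2_density d x = (if x > 0 then x powr (d/2 - 1) * exp (-x/2) / (2 powr (d/2) * Gamma (d/2)) else 0)"

definition theta :: "(nat \<Rightarrow> real) \<Rightarrow> nat \<Rightarrow> real" where
  "theta w N = 1 + real N powr (-2/3) * w N"

definition rr :: "real \<Rightarrow> nat \<Rightarrow> nat \<Rightarrow> real" where
  "rr th N i = 1 + sqrt (1 - (real i - 1) / (real N * th\<^sup>2))"

definition mm :: "real \<Rightarrow> nat \<Rightarrow> nat \<Rightarrow> real" where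
  "mm th N i = 1 - sqrt (1 - (real i - 1) / (real N * th\<^sup>2))"

definition gam :: "real \<Rightarrow> nat \<Rightarrow> nat \<Rightarrow> real" where
  "gam th N i = mm th N i / rr th N i"

definition dlt :: "real \<Rightarrow> nat \<Rightarrow> nat \<Rightarrow> real" where
  "dlt th N i = mm th N i / rr th N i - mm th N i / rr th N (i - 1)"

definition cc :: "('a \<Rightarrow> real) \<Rightarrow> nat \<Rightarrow> 'a \<Rightarrow> real" where
  "cc bi i \<omega> = ((bi \<omega>)\<^sup>2 - real i) / sqrt (real i)"

definition xi :: "(nat \<Rightarrow> 'a \<Rightarrow> real) \<Rightarrow> (nat \<Rightarrow> 'a \<Rightarrow> real) \<Rightarrow> real \<Rightarrow> nat \<Rightarrow> nat \<Rightarrow> 'a \<Rightarrow> real" where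
  "xi a b th N i \<omega> = a i \<omega> / (sqrt (real N) * th * rr th N i)
     + sqrt (mm th N i / rr th N i) * cc (b (i - 1)) (i - 1) \<omega> / (sqrt (real N) * th * rr th N (i - 1))"

primrec LL :: "(nat \<Rightarrow> 'a \<Rightarrow> real) \<Rightarrow> (nat \<Rightarrow> 'a \<Rightarrow> real) \<Rightarrow> real \<Rightarrow> nat \<Rightarrow> nat \<Rightarrow> 'a \<Rightarrow> real" where
  "LL a b th N 0 \<omega> = 0"
| "LL a b th N (Suc k) \<omega> = (if Suc k \<le> 2 then 0
      else xi a b th N (Suc k) \<omega> + gam th N (Suc k) * LL a b th N k \<omega>)"

end

theory Submission
  imports Defs
begin


lemma gamma_nn:
  fixes z :: real assumes z: "z > 0"
  shows "(\<integral>\<^sup>+x. ennreal (if x > 0 then x powr (z-1) * exp(-x/2) else 0) \<partial>lborel) = ennreal (2 powr z * Gamma z)"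
proof -
  have G: "(\<integral>\<^sup>+t. ennreal (t powr (z-1)/exp t) * indicator {0..} t \<partial>lborel) = ennreal (Gamma z)"
    by (rule nn_integral_has_integral_lebesgue'[OF _ Gamma_integral_real[OF z]]) simp
  define F where "F x = ennreal (if x > 0 then x powr (z-1) * exp(-x/2) else 0)" for x :: real
  have Fm: "F \<in> borel_measurable borel" unfolding F_def by measurable
  have "(\<integral>\<^sup>+x. F x \<partial>lborel) = ennreal \<bar>2\<bar> * (\<integral>\<^sup>+x. F (0 + 2 * x) \<partial>lborel)"
    by (rule nn_integral_real_affine[OF Fm]) simp
  also have "(\<lambda>x. F (0 + 2 * x)) = (\<lambda>x. ennreal (2 powr (z-1)) * (ennreal (x powr (z-1)/exp x) * indicator {0..} x))"
  proof
    fix x :: real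
    show "F (0 + 2 * x) = ennreal (2 powr (z-1)) * (ennreal (x powr (z-1)/exp x) * indicator {0..} x)"
    proof (cases "x > 0")
      case True
      then show ?thesis unfolding F_def
        by (simp add: powr_mult exp_minus field_simps ennreal_mult'[symmetric] indicator_def)
    next
      case False
      then show ?thesis unfolding F_def by (auto simp: indicator_def)
    qed
  qed
  also have "(\<integral>\<^sup>+x. ennreal (2 powr (z-1)) * (ennreal (x powr (z-1)/exp x) * indicator {0..} x) \<partial>lborel)
     = ennreal (2 powr (z-1)) * ennreal (Gamma z)"
    by (subst nn_integral_cmult) (auto simp: G)
  also have "ennreal \<bar>2\<bar> * (ennreal (2 powr (z-1)) * ennreal (Gamma z)) = ennreal (2 powr z * Gamma z)"
  proof -
    have "ennreal \<bar>2\<bar> * (ennreal (2 powr (z-1)) * ennreal (Gamma z)) = ennreal (2 * (2 powr (z-1) * Gamma z))"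
      using z by (simp add: ennreal_mult)
    also have "2 * (2 powr (z-1) * Gamma z) = 2 powr z * Gamma z"
      by (simp add: powr_diff)
    finally show ?thesis .
  qed
  finally show ?thesis unfolding F_def .
qed

lemma chi2_moment:
  fixes d :: real assumes d: "d > 0"
  shows "has_bochner_integral lborel (\<lambda>x. chi2_density d x * x ^ n) (2 ^ n * Gamma (d/2 + n) / Gamma (d/2))"
proof -
  define z where "z = d/2 + n"
  have z: "z > 0" using d unfolding z_def by simp
  define g where "g x = (if x > 0 then x powr (z-1) * exp(-x/2) else 0)" for x :: real
  have gm: "g \<in> borel_measurable lborel" unfolding g_def by measurable
  have hb: "has_bochner_integral lborel g (2 powr z * Gamma z)"
    by (rule has_bochner_integral_nn_integral[OF gm])
       (use z gamma_nn[OF z] in \<open>auto simp: g_def\<close>)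
  have Gp: "Gamma (d/2) > 0" using d by simp
  have eq: "(\<lambda>x. chi2_density d x * x ^ n) = (\<lambda>x. g x / (2 powr (d/2) * Gamma (d/2)))"
  proof
    fix x :: real
    show "chi2_density d x * x ^ n = g x / (2 powr (d/2) * Gamma (d/2))"
    proof (cases "x > 0")
      case True
      have "x powr (d/2 - 1) * x ^ n = x powr (z - 1)"
        using True by (simp add: z_def powr_realpow[symmetric] powr_add[symmetric] algebra_simps)
      then show ?thesis using True unfolding chi2_density_def g_def
        by (simp add: field_simps)
    next
      case False
      then show ?thesis unfolding chi2_density_def g_def by simp
    qed
  qed
  have "has_bochner_integral lborel (\<lambda>x. g x / (2 powr (d/2) * Gamma (d/2))) (2 powr z * Gamma z / (2 powr (d/2) * Gamma (d/2)))"
    by (rule has_bochner_integral_divide_zero[OF hb])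
  moreover have "2 powr z * Gamma z / (2 powr (d/2) * Gamma (d/2)) = 2 ^ n * Gamma (d/2 + n) / Gamma (d/2)"
  proof -
    have "2 powr z = 2 ^ n * 2 powr (d/2)"
      unfolding z_def by (simp add: powr_add powr_realpow)
    then show ?thesis using Gp unfolding z_def by simp
  qed
  ultimately show ?thesis using eq by simp
qed

lemma Gamma_p1: "(z::real) > 0 \<Longrightarrow> Gamma (z + 1) = z * Gamma z"
  by (rule Gamma_plus1) (auto dest: nonpos_Ints_nonpos)

lemma chi_moments:
  assumes P: "prob_space M" and al: "\<alpha> > 0" and k: "k > (0::real)"
    and Bm: "B \<in> borel_measurable M"
    and D: "distributed M lborel (\<lambda>\<omega>. (2 / \<alpha>) * (B \<omega>)\<^sup>2) (\<lambda>x. ennreal (chi2_density (2 * k / \<alpha>) x))"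
  shows "integrable M (\<lambda>\<omega>. (B \<omega>)^2)" "prob_space.expectation M (\<lambda>\<omega>. (B \<omega>)^2) = k"
    "integrable M (\<lambda>\<omega>. (B \<omega>)^4)" "prob_space.expectation M (\<lambda>\<omega>. (B \<omega>)^4) = k^2 + \<alpha> * k"
proof -
  define d where "d = 2 * k / \<alpha>"
  have d: "d > 0" using al k by (simp add: d_def)
  have nn: "\<And>x. 0 \<le> chi2_density d x"
    using d by (simp add: chi2_density_def)
  have Gp: "Gamma (d/2) > 0" using d by simp
  have G1: "Gamma (d/2 + 1) = d/2 * Gamma (d/2)" using d by (simp add: Gamma_p1)
  have G2: "Gamma (d/2 + 2) = (d/2 + 1) * (d/2) * Gamma (d/2)"
    using Gamma_p1[of "d/2+1"] d G1 by (simp add: add.assoc)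
  have DD: "distributed M lborel (\<lambda>\<omega>. (2 / \<alpha>) * (B \<omega>)\<^sup>2) (\<lambda>x. ennreal (chi2_density d x))"
    using D by (simp add: d_def)
  have mom: "integrable M (\<lambda>\<omega>. ((2 / \<alpha>) * (B \<omega>)\<^sup>2) ^ n) \<and>
      (\<integral>\<omega>. ((2 / \<alpha>) * (B \<omega>)\<^sup>2) ^ n \<partial>M) = 2 ^ n * Gamma (d/2 + n) / Gamma (d/2)" for n
  proof -
    have hb: "has_bochner_integral lborel (\<lambda>x. chi2_density d x * x ^ n) (2 ^ n * Gamma (d/2 + n) / Gamma (d/2))"
      by (rule chi2_moment[OF d])
    have "integrable M (\<lambda>\<omega>. ((2 / \<alpha>) * (B \<omega>)\<^sup>2) ^ n)"
      using distributed_integrable[OF DD, of "\<lambda>x. x ^ n"] nn hb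
      by (auto simp: has_bochner_integral_iff)
    moreover have "(\<integral>\<omega>. ((2 / \<alpha>) * (B \<omega>)\<^sup>2) ^ n \<partial>M) = 2 ^ n * Gamma (d/2 + n) / Gamma (d/2)"
      using distributed_integral[OF DD, of "\<lambda>x. x ^ n"] nn hb
      by (auto simp: has_bochner_integral_iff)
    ultimately show ?thesis by simp
  qed
  have e1: "(\<lambda>\<omega>. (B \<omega>)^2) = (\<lambda>\<omega>. (\<alpha>/2) * ((2 / \<alpha>) * (B \<omega>)\<^sup>2) ^ 1)"
    using al by (auto simp: field_simps)
  have e2: "(\<lambda>\<omega>. (B \<omega>)^4) = (\<lambda>\<omega>. (\<alpha>/2)^2 * ((2 / \<alpha>) * (B \<omega>)\<^sup>2) ^ 2)"
    using al by (auto simp: field_simps)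
  have i1: "integrable M (\<lambda>\<omega>. ((2 / \<alpha>) * (B \<omega>)\<^sup>2) ^ 1)" 
    and v1: "(\<integral>\<omega>. ((2 / \<alpha>) * (B \<omega>)\<^sup>2) ^ 1 \<partial>M) = 2 ^ 1 * Gamma (d/2 + 1) / Gamma (d/2)"
    using mom[of 1] by auto
  have i2: "integrable M (\<lambda>\<omega>. ((2 / \<alpha>) * (B \<omega>)\<^sup>2) ^ 2)" 
    and v2: "(\<integral>\<omega>. ((2 / \<alpha>) * (B \<omega>)\<^sup>2) ^ 2 \<partial>M) = 2 ^ 2 * Gamma (d/2 + 2) / Gamma (d/2)"
    using mom[of 2] by auto
  show "integrable M (\<lambda>\<omega>. (B \<omega>)^2)" unfolding e1 by (rule integrable_mult_right[OF i1])
  show "integrable M (\<lambda>\<omega>. (B \<omega>)^4)" unfolding e2 by (rule integrable_mult_right[OF i2])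
  show "prob_space.expectation M (\<lambda>\<omega>. (B \<omega>)^2) = k" unfolding e1 integral_mult_right_zero v1
    using G1 Gp al by (simp add: d_def)
  show "prob_space.expectation M (\<lambda>\<omega>. (B \<omega>)^4) = k^2 + \<alpha> * k" unfolding e2 integral_mult_right_zero v2
    using G2 Gp al by (simp add: d_def field_simps power2_eq_square)
qed

lemma cc_moments:
  assumes P: "prob_space M" and al: "\<alpha> > 0" and k: "k > (0::nat)"
    and Bm: "B \<in> borel_measurable M"
    and D: "distributed M lborel (\<lambda>\<omega>. (2 / \<alpha>) * (B \<omega>)\<^sup>2) (\<lambda>x. ennreal (chi2_density (2 * real k / \<alpha>) x))"
  shows "integrable M (cc B k)" "prob_space.expectation M (cc B k) = 0"
    "integrable M (\<lambda>\<omega>. (cc B k \<omega>)^2)" "prob_space.expectation M (\<lambda>\<omega>. (cc B k \<omega>)^2) = \<alpha>"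
proof -
  interpret prob_space M by fact
  have kk: "real k > 0" using k by simp
  note m = chi_moments[OF P al kk Bm D]
  have sk: "sqrt (real k) > 0" using kk by simp
  have ec: "cc B k = (\<lambda>\<omega>. (B \<omega>)^2 / sqrt k - real k / sqrt k)"
    by (auto simp: cc_def diff_divide_distrib)
  have ec2: "(\<lambda>\<omega>. (cc B k \<omega>)^2) = (\<lambda>\<omega>. (B \<omega>)^4 / k - 2 * (B \<omega>)^2 + real k)"
    using kk by (auto simp: cc_def power_divide power2_diff field_simps power2_eq_square power4_eq_xxxx)
  show "integrable M (cc B k)" unfolding ec using m by auto
  show "expectation (cc B k) = 0" unfolding ec using m by (simp add: prob_space)
  show "integrable M (\<lambda>\<omega>. (cc B k \<omega>)^2)" unfolding ec2 using m by auto
  have "expectation (\<lambda>\<omega>. (B \<omega>)^4 / k - 2 * (B \<omega>)^2 + real k) = expectation (\<lambda>\<omega>. (B \<omega>)^4) / k - 2 * expectation (\<lambda>\<omega>. (B \<omega>)^2) + real k"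
    using m(1,3) by (simp add: prob_space)
  then show "expectation (\<lambda>\<omega>. (cc B k \<omega>)^2) = \<alpha>" unfolding ec2 using m kk
    by (simp add: field_simps power2_eq_square)
qed

lemma a_moments:
  assumes P: "prob_space M" and al: "\<alpha> > 0"
    and D: "distributed M lborel A (\<lambda>x. ennreal (normal_density 0 (sqrt \<alpha>) x))"
  shows "integrable M A" "prob_space.expectation M A = 0"
    "integrable M (\<lambda>\<omega>. (A \<omega>)^2)" "prob_space.expectation M (\<lambda>\<omega>. (A \<omega>)^2) = \<alpha>"
proof -
  interpret prob_space M by fact
  have s: "sqrt \<alpha> > 0" using al by simp
  have D': "distributed M lborel A (normal_density 0 (sqrt \<alpha>))" using D by simp
  show "integrable M A"
  proof -
    have "integrable lborel (\<lambda>x. normal_density 0 (sqrt \<alpha>) x * x)"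
      by (rule integrable_normal_moment_nz_1, rule s)
    then show ?thesis using distributed_integrable[OF D, of "\<lambda>x. x"] by simp
  qed
  show e: "expectation A = 0" by (rule normal_distributed_expectation[OF s D'])
  show "integrable M (\<lambda>\<omega>. (A \<omega>)^2)"
  proof -
    have "integrable lborel (\<lambda>x. normal_density 0 (sqrt \<alpha>) x * x^2)"
      using integrable_normal_moment[where \<sigma>="sqrt \<alpha>" and \<mu>=0 and k=2] s by simp
    then show ?thesis using distributed_integrable[OF D, of "\<lambda>x. x^2"] by simp
  qed
  show "expectation (\<lambda>\<omega>. (A \<omega>)^2) = \<alpha>"
    using normal_distributed_variance[OF s D'] e al by simp
qed



lemma comp_meas: "(\<lambda>g. g x) \<in> borel_measurable (PiM A (\<lambda>_. (borel :: real measure)))"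
proof (cases "x \<in> A")
  case True then show ?thesis by (rule measurable_component_singleton)
next
  case False
  have "\<And>g. g \<in> space (PiM A (\<lambda>_. (borel :: real measure))) \<Longrightarrow> g x = undefined"
    using False by (metis PiE_arb space_PiM)
  then show ?thesis
    by (subst measurable_cong[where g="\<lambda>_. undefined"]) auto
qed

lemma indep_block:
  assumes P: "prob_space M" and ind: "prob_space.indep_vars M (\<lambda>_. borel) X I"
    and AB: "A \<inter> B = {}" "A \<subseteq> I" "B \<subseteq> I"
    and F: "F \<in> borel_measurable (PiM A (\<lambda>_. (borel :: real measure)))"
    and G: "G \<in> borel_measurable (PiM B (\<lambda>_. (borel :: real measure)))"
    and iF: "integrable M (\<lambda>\<omega>. F (restrict (\<lambda>i. X i \<omega>) A) :: real)"
    and iG: "integrable M (\<lambda>\<omega>. G (restrict (\<lambda>i. X i \<omega>) B) :: real)"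
  shows "integrable M (\<lambda>\<omega>. F (restrict (\<lambda>i. X i \<omega>) A) * G (restrict (\<lambda>i. X i \<omega>) B))"
    "(\<integral>\<omega>. F (restrict (\<lambda>i. X i \<omega>) A) * G (restrict (\<lambda>i. X i \<omega>) B) \<partial>M)
       = (\<integral>\<omega>. F (restrict (\<lambda>i. X i \<omega>) A) \<partial>M) * (\<integral>\<omega>. G (restrict (\<lambda>i. X i \<omega>) B) \<partial>M)"
proof -
  interpret prob_space M by fact
  have iv: "indep_var borel (F \<circ> (\<lambda>\<omega>. restrict (\<lambda>i. X i \<omega>) A)) borel (G \<circ> (\<lambda>\<omega>. restrict (\<lambda>i. X i \<omega>) B))"
    by (rule indep_var_compose[OF indep_var_restrict[OF ind AB] F G])
  have iF': "integrable M (F \<circ> (\<lambda>\<omega>. restrict (\<lambda>i. X i \<omega>) A))" using iF by (simp add: comp_def)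
  have iG': "integrable M (G \<circ> (\<lambda>\<omega>. restrict (\<lambda>i. X i \<omega>) B))" using iG by (simp add: comp_def)
  show "integrable M (\<lambda>\<omega>. F (restrict (\<lambda>i. X i \<omega>) A) * G (restrict (\<lambda>i. X i \<omega>) B))"
    using indep_var_integrable[OF iv iF' iG'] by (simp add: comp_def)
  show "(\<integral>\<omega>. F (restrict (\<lambda>i. X i \<omega>) A) * G (restrict (\<lambda>i. X i \<omega>) B) \<partial>M)
       = (\<integral>\<omega>. F (restrict (\<lambda>i. X i \<omega>) A) \<partial>M) * (\<integral>\<omega>. G (restrict (\<lambda>i. X i \<omega>) B) \<partial>M)"
    using indep_var_lebesgue_integral[OF iv iF' iG'] by (simp add: comp_def)
qed

lemma LL_le2: "k \<le> 2 \<Longrightarrow> LL a b th N k \<omega> = 0"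
  by (cases k) auto

lemma LL_cong:
  "(\<And>j. 3 \<le> j \<Longrightarrow> j \<le> k \<Longrightarrow> a j \<omega> = a' j \<omega>' \<and> b (j-1) \<omega> = b' (j-1) \<omega>') \<Longrightarrow>
    LL a b th N k \<omega> = LL a' b' th N k \<omega>'"
proof (induction k)
  case 0 then show ?case by simp
next
  case (Suc k)
  have IH: "LL a b th N k \<omega> = LL a' b' th N k \<omega>'"
    using Suc.prems by (intro Suc.IH) auto
  show ?case
  proof (cases "Suc k \<le> 2")
    case True then show ?thesis by simp
  next
    case False
    then have h: "a (Suc k) \<omega> = a' (Suc k) \<omega>'" "b k \<omega> = b' k \<omega>'"
      using Suc.prems[of "Suc k"] by auto
    have "xi a b th N (Suc k) \<omega> = xi a' b' th N (Suc k) \<omega>'"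
      unfolding xi_def cc_def using h by simp
    then show ?thesis using False IH by simp
  qed
qed

lemma LL_meas: "LL (\<lambda>j g. g (Inl j)) (\<lambda>j g. g (Inr j)) th N k \<in> borel_measurable (PiM A (\<lambda>_. (borel :: real measure)))"
proof (induction k)
  case 0 then show ?case by simp
next
  case (Suc k)
  have c1: "(\<lambda>g. g (Inl j)) \<in> borel_measurable (PiM A (\<lambda>_. (borel :: real measure)))" for j by (rule comp_meas)
  have c2: "(\<lambda>g. g (Inr j)) \<in> borel_measurable (PiM A (\<lambda>_. (borel :: real measure)))" for j by (rule comp_meas)
  have x: "xi (\<lambda>j g. g (Inl j)) (\<lambda>j g. g (Inr j)) th N (Suc k) \<in> borel_measurable (PiM A (\<lambda>_. (borel :: real measure)))"
    unfolding xi_def cc_def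
    by (intro borel_measurable_add borel_measurable_times borel_measurable_divide borel_measurable_diff
         borel_measurable_power c1 c2 measurable_const) simp_all
  show ?case 
    using x Suc.IH by simp
qed

lemma xi_meas: "xi (\<lambda>j g. g (Inl j)) (\<lambda>j g. g (Inr j)) th N i \<in> borel_measurable (PiM A (\<lambda>_. (borel :: real measure)))"
proof -
  have c1: "(\<lambda>g. g (Inl j)) \<in> borel_measurable (PiM A (\<lambda>_. (borel :: real measure)))" for j by (rule comp_meas)
  have c2: "(\<lambda>g. g (Inr j)) \<in> borel_measurable (PiM A (\<lambda>_. (borel :: real measure)))" for j by (rule comp_meas)
  show ?thesis
    unfolding xi_def cc_def
    by (intro borel_measurable_add borel_measurable_times borel_measurable_divide borel_measurable_diff
         borel_measurable_power c1 c2 measurable_const) simp_all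
qed

primrec VV :: "real \<Rightarrow> nat \<Rightarrow> nat \<Rightarrow> real" where
  "VV th N 0 = 0"
| "VV th N (Suc k) = (if Suc k \<le> 2 then 0 else (gam th N (Suc k))\<^sup>2 * VV th N k
     + (1 / (sqrt (real N) * th * rr th N (Suc k)))\<^sup>2
     + (sqrt (mm th N (Suc k) / rr th N (Suc k)) / (sqrt (real N) * th * rr th N k))\<^sup>2)"

lemma LL_moments:
  fixes a b :: "nat \<Rightarrow> 'a \<Rightarrow> real"
  assumes P: "prob_space M" and al: "\<alpha> > 0"
    and ind: "prob_space.indep_vars M (\<lambda>_. borel)
          (\<lambda>k. case k of Inl i \<Rightarrow> a i | Inr i \<Rightarrow> b i)
          (Inl ` {1..N} \<union> Inr ` {1..N - 1})"
    and ad: "\<And>i. 1 \<le> i \<Longrightarrow> i \<le> N \<Longrightarrow>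
          distributed M lborel (a i) (\<lambda>x. ennreal (normal_density 0 (sqrt \<alpha>) x))"
    and bd: "\<And>i. 1 \<le> i \<Longrightarrow> i \<le> N - 1 \<Longrightarrow>
          distributed M lborel (\<lambda>\<omega>. (2 / \<alpha>) * (b i \<omega>)\<^sup>2)
            (\<lambda>x. ennreal (chi2_density (2 * real i / \<alpha>) x))"
  shows "k \<le> N \<Longrightarrow> integrable M (LL a b th N k) \<and> integrable M (\<lambda>\<omega>. (LL a b th N k \<omega>)\<^sup>2) \<and>
      prob_space.expectation M (\<lambda>\<omega>. (LL a b th N k \<omega>)\<^sup>2) = \<alpha> * VV th N k"
proof (induction k)
  case 0 then show ?case by simp
next
  case (Suc k)
  interpret prob_space M by fact
  show ?case
  proof (cases "Suc k \<le> 2")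
    case True then show ?thesis by simp
  next
    case False
    then have k2: "k \<ge> 2" and kN: "Suc k \<le> N" using Suc.prems by auto
    from Suc.IH kN have IH: "integrable M (LL a b th N k)" "integrable M (\<lambda>\<omega>. (LL a b th N k \<omega>)\<^sup>2)"
      "expectation (\<lambda>\<omega>. (LL a b th N k \<omega>)\<^sup>2) = \<alpha> * VV th N k" by auto
    define X where "X = (\<lambda>k. case k of Inl i \<Rightarrow> a i | Inr i \<Rightarrow> b i)"
    define I where "I = Inl ` {1..N} \<union> Inr ` {1..N - 1}"
    have ind': "indep_vars (\<lambda>_. borel) X I" using ind by (simp add: X_def I_def)
    have bm: "b k \<in> borel_measurable M"
    proof -
      have "X (Inr k) \<in> borel_measurable M" using ind' k2 kN unfolding indep_vars_def I_def by auto
      then show ?thesis by (simp add: X_def)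
    qed
    note am = a_moments[OF P al ad[of "Suc k"]]
    note cm = cc_moments[OF P al _ bm bd[of k]]
    have am': "integrable M (a (Suc k))" "expectation (a (Suc k)) = 0"
      "integrable M (\<lambda>\<omega>. (a (Suc k) \<omega>)^2)" "expectation (\<lambda>\<omega>. (a (Suc k) \<omega>)^2) = \<alpha>"
      using am kN by auto
    have cm': "integrable M (cc (b k) k)" "expectation (cc (b k) k) = 0"
      "integrable M (\<lambda>\<omega>. (cc (b k) k \<omega>)^2)" "expectation (\<lambda>\<omega>. (cc (b k) k \<omega>)^2) = \<alpha>"
      using cm kN k2 by auto
    have ac: "integrable M (\<lambda>\<omega>. a (Suc k) \<omega> * cc (b k) k \<omega>) \<and> expectation (\<lambda>\<omega>. a (Suc k) \<omega> * cc (b k) k \<omega>) = 0"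
    proof -
      have F: "(\<lambda>g. g (Inl (Suc k))) \<in> borel_measurable (PiM {Inl (Suc k)} (\<lambda>_. (borel :: real measure)))"
        by (rule comp_meas)
      have G: "cc (\<lambda>g. g (Inr k)) k \<in> borel_measurable (PiM {Inr k} (\<lambda>_. (borel :: real measure)))"
        unfolding cc_def by (intro borel_measurable_divide borel_measurable_diff borel_measurable_power comp_meas measurable_const) simp_all
      have e1: "(\<lambda>\<omega>. (\<lambda>g. g (Inl (Suc k))) (restrict (\<lambda>i. X i \<omega>) {Inl (Suc k)})) = a (Suc k)"
        by (auto simp: X_def)
      have e2: "(\<lambda>\<omega>. cc (\<lambda>g. g (Inr k)) k (restrict (\<lambda>i. X i \<omega>) {Inr k})) = cc (b k) k"
        by (auto simp: X_def cc_def)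
      have sub: "{Inl (Suc k)} \<subseteq> I" "{Inr k} \<subseteq> I" using k2 kN by (auto simp: I_def)
      have e3: "(\<lambda>\<omega>. (\<lambda>g. g (Inl (Suc k))) (restrict (\<lambda>i. X i \<omega>) {Inl (Suc k)}) * cc (\<lambda>g. g (Inr k)) k (restrict (\<lambda>i. X i \<omega>) {Inr k}))
         = (\<lambda>\<omega>. a (Suc k) \<omega> * cc (b k) k \<omega>)" by (auto simp: X_def cc_def)
      have iF: "integrable M (\<lambda>\<omega>. (\<lambda>g. g (Inl (Suc k))) (restrict (\<lambda>i. X i \<omega>) {Inl (Suc k)}))"
        unfolding e1 by (rule am'(1))
      have iG: "integrable M (\<lambda>\<omega>. cc (\<lambda>g. g (Inr k)) k (restrict (\<lambda>i. X i \<omega>) {Inr k}))"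
        unfolding e2 by (rule cm'(1))
      have disj: "{Inl (Suc k)} \<inter> {Inr k} = {}" by simp
      note r = indep_block[OF P ind' disj sub F G iF iG]
      show ?thesis using r[unfolded e1 e2 e3] am' cm' by simp
    qed
    define A where "A = 1 / (sqrt (real N) * th * rr th N (Suc k))"
    define B where "B = sqrt (mm th N (Suc k) / rr th N (Suc k)) / (sqrt (real N) * th * rr th N k)"
    define \<xi> where "\<xi> = xi a b th N (Suc k)"
    have xie: "\<xi> = (\<lambda>\<omega>. A * a (Suc k) \<omega> + B * cc (b k) k \<omega>)"
      by (auto simp: \<xi>_def xi_def A_def B_def)
    have xi_int: "integrable M \<xi>" unfolding xie using am' cm' by simp
    have xi_E: "expectation \<xi> = 0" unfolding xie using am' cm' by simp
    have xi2: "(\<lambda>\<omega>. (\<xi> \<omega>)\<^sup>2) = (\<lambda>\<omega>. A\<^sup>2 * (a (Suc k) \<omega>)\<^sup>2 + (2 * A * B) * (a (Suc k) \<omega> * cc (b k) k \<omega>) + B\<^sup>2 * (cc (b k) k \<omega>)\<^sup>2)"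
      unfolding xie by (auto simp: power2_eq_square algebra_simps)
    have xi2_int: "integrable M (\<lambda>\<omega>. (\<xi> \<omega>)\<^sup>2)" unfolding xi2 using am' cm' ac by simp
    have xi2_E: "expectation (\<lambda>\<omega>. (\<xi> \<omega>)\<^sup>2) = A\<^sup>2 * \<alpha> + B\<^sup>2 * \<alpha>" unfolding xi2 using am' cm' ac by simp
    define SA where "SA = Inl ` {1..k} \<union> Inr ` {1..k-1}"
    define SB where "SB = {Inl (Suc k), Inr k}"
    have sub: "SA \<inter> SB = {}" "SA \<subseteq> I" "SB \<subseteq> I" using k2 kN by (auto simp: SA_def SB_def I_def)
    have eL: "(\<lambda>\<omega>. LL (\<lambda>j g. g (Inl j)) (\<lambda>j g. g (Inr j)) th N k (restrict (\<lambda>i. X i \<omega>) SA)) = LL a b th N k"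
    proof
      fix \<omega>
      show "LL (\<lambda>j g. g (Inl j)) (\<lambda>j g. g (Inr j)) th N k (restrict (\<lambda>i. X i \<omega>) SA) = LL a b th N k \<omega>"
        by (rule LL_cong) (auto simp: SA_def X_def inj_image_mem_iff)
    qed
    have eX: "(\<lambda>\<omega>. xi (\<lambda>j g. g (Inl j)) (\<lambda>j g. g (Inr j)) th N (Suc k) (restrict (\<lambda>i. X i \<omega>) SB)) = \<xi>"
      by (auto simp: SB_def X_def \<xi>_def xi_def cc_def)
    have iL: "integrable M (\<lambda>\<omega>. LL (\<lambda>j g. g (Inl j)) (\<lambda>j g. g (Inr j)) th N k (restrict (\<lambda>i. X i \<omega>) SA))"
      unfolding eL by (rule IH(1))
    have iX: "integrable M (\<lambda>\<omega>. xi (\<lambda>j g. g (Inl j)) (\<lambda>j g. g (Inr j)) th N (Suc k) (restrict (\<lambda>i. X i \<omega>) SB))"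
      unfolding eX by (rule xi_int)
    note r2 = indep_block[OF P ind' sub LL_meas xi_meas iL iX]
    have xL: "integrable M (\<lambda>\<omega>. LL a b th N k \<omega> * \<xi> \<omega>)" "expectation (\<lambda>\<omega>. LL a b th N k \<omega> * \<xi> \<omega>) = 0"
    proof -
      have eP: "(\<lambda>\<omega>. LL (\<lambda>j g. g (Inl j)) (\<lambda>j g. g (Inr j)) th N k (restrict (\<lambda>i. X i \<omega>) SA) *
          xi (\<lambda>j g. g (Inl j)) (\<lambda>j g. g (Inr j)) th N (Suc k) (restrict (\<lambda>i. X i \<omega>) SB)) = (\<lambda>\<omega>. LL a b th N k \<omega> * \<xi> \<omega>)"
        by (intro ext) (simp only: fun_cong[OF eL] fun_cong[OF eX])
      show "integrable M (\<lambda>\<omega>. LL a b th N k \<omega> * \<xi> \<omega>)" using r2(1)[unfolded eP] .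
      show "expectation (\<lambda>\<omega>. LL a b th N k \<omega> * \<xi> \<omega>) = 0" using r2(2)[unfolded eP eL eX] xi_E by simp
    qed
    have Le: "LL a b th N (Suc k) = (\<lambda>\<omega>. \<xi> \<omega> + gam th N (Suc k) * LL a b th N k \<omega>)"
      using False by (auto simp: \<xi>_def)
    have L2: "(\<lambda>\<omega>. (LL a b th N (Suc k) \<omega>)\<^sup>2) = (\<lambda>\<omega>. (\<xi> \<omega>)\<^sup>2 + (2 * gam th N (Suc k)) * (LL a b th N k \<omega> * \<xi> \<omega>)
        + (gam th N (Suc k))\<^sup>2 * (LL a b th N k \<omega>)\<^sup>2)"
      unfolding Le by (auto simp: power2_eq_square algebra_simps)
    have "integrable M (LL a b th N (Suc k))" unfolding Le using xi_int IH by simp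
    moreover have "integrable M (\<lambda>\<omega>. (LL a b th N (Suc k) \<omega>)\<^sup>2)" unfolding L2 using xi2_int xL IH by simp
    moreover have "expectation (\<lambda>\<omega>. (LL a b th N (Suc k) \<omega>)\<^sup>2) = \<alpha> * VV th N (Suc k)"
    proof -
      have "expectation (\<lambda>\<omega>. (LL a b th N (Suc k) \<omega>)\<^sup>2) = expectation (\<lambda>\<omega>. (\<xi> \<omega>)\<^sup>2) + (2 * gam th N (Suc k)) * expectation (\<lambda>\<omega>. LL a b th N k \<omega> * \<xi> \<omega>)
         + (gam th N (Suc k))\<^sup>2 * expectation (\<lambda>\<omega>. (LL a b th N k \<omega>)\<^sup>2)"
        unfolding L2 using xi2_int xL IH by simp
      also have "\<dots> = \<alpha> * VV th N (Suc k)" using xi2_E xL IH False by (simp add: A_def B_def algebra_simps)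
      finally show ?thesis .
    qed
    ultimately show ?thesis by blast
  qed
qed



lemma inv_diff: "x \<noteq> 0 \<Longrightarrow> y \<noteq> 0 \<Longrightarrow> 1/x - 1/(y::real) = (y - x)/(x*y)"
  by (simp add: field_simps)

lemma e_bound:
  fixes a s b t :: real
  assumes t: "t > 0" and s: "s > 0" "s \<le> 1" and b: "b > 0" and a1: "a \<le> 1" and a0: "a \<ge> 0"
    and ha: "a\<^sup>2 = s\<^sup>2 + t" and hb: "b\<^sup>2 = s\<^sup>2 - t"
  defines "g \<equiv> (1 - s) / (1 + s)"
  shows "\<bar>g\<^sup>2 * (1 - (1 + s) / (1 + a)) + t * (1 / (1 + s)\<^sup>2 + g / (1 + a)\<^sup>2) - (1 - (1 + b) / (1 + s))\<bar>
          \<le> 3 * t\<^sup>2 / s ^ 3"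
proof -
  have as: "a > s" using ha t s a0 by (smt (verit) power_mono)
  have bs: "b < s" using hb t s b by (smt (verit) power_mono)
  define d1 where "d1 = a - s"
  define d2 where "d2 = s - b"
  have d1: "d1 * (a + s) = t" unfolding d1_def using ha by (simp add: algebra_simps power2_eq_square)
  have d2: "d2 * (s + b) = t" unfolding d2_def using hb by (simp add: algebra_simps power2_eq_square)
  have d1p: "d1 > 0" "d2 > 0" using as bs by (auto simp: d1_def d2_def)
  have d1b: "d1 \<le> t / (2 * s)"
  proof -
    have "d1 * (2 * s) \<le> d1 * (a + s)" using d1p as by (intro mult_left_mono) auto
    then show ?thesis using d1 s by (simp add: field_simps)
  qed
  have d2b: "d2 \<le> t / s"
  proof -
    have "d2 * s \<le> d2 * (s + b)" using d1p b by (intro mult_left_mono) auto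
    then show ?thesis using d2 s by (simp add: field_simps)
  qed
  define X1 where "X1 = 1 / ((a + s) * (1 + a)) - 1 / (2 * s * (1 + s))"
  define X2 where "X2 = 1 / (1 + a)\<^sup>2 - 1 / (1 + s)\<^sup>2"
  define X3 where "X3 = 1 / ((s + b) * (1 + s)) - 1 / (2 * s * (1 + s))"
  have W1: "1 - (1 + s) / (1 + a) = t / ((a + s) * (1 + a))"
  proof -
    have "t / ((a + s) * (1 + a)) = d1 / (1 + a)" unfolding d1[symmetric] using as s a0 by simp
    also have "\<dots> = 1 - (1 + s) / (1 + a)" using a0 by (simp add: d1_def field_simps)
    finally show ?thesis by simp
  qed
  have W2: "1 - (1 + b) / (1 + s) = t / ((s + b) * (1 + s))"
  proof -
    have "t / ((s + b) * (1 + s)) = d2 / (1 + s)" unfolding d2[symmetric] using bs s b by simp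
    also have "\<dots> = 1 - (1 + b) / (1 + s)" using s by (simp add: d2_def field_simps)
    finally show ?thesis by simp
  qed
  have Z: "g\<^sup>2 / (2 * s * (1 + s)) + 1 / (1 + s)\<^sup>2 + g / (1 + s)\<^sup>2 - 1 / (2 * s * (1 + s)) = 0"
  proof -
    have sp: "1 + s \<noteq> 0" "s \<noteq> 0" using s by auto
    define u where "u = 1 + s"
    have u: "u \<noteq> 0" using sp u_def by simp
    have "((1 - s) / u)\<^sup>2 / (2 * s * u) + 1 / u\<^sup>2 + ((1 - s) / u) / u\<^sup>2 - 1 / (2 * s * u) =
       ((1 - s)\<^sup>2 + 2 * s * u + 2 * s * (1 - s) - u\<^sup>2) / (2 * s * u ^ 3)"
      using u sp by (simp add: field_simps power2_eq_square power3_eq_cube)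
    also have "(1 - s)\<^sup>2 + 2 * s * u + 2 * s * (1 - s) - u\<^sup>2 = 0"
      unfolding u_def by (simp add: power2_eq_square algebra_simps)
    finally show ?thesis unfolding g_def u_def by simp
  qed
  have E: "g\<^sup>2 * (1 - (1 + s) / (1 + a)) + t * (1 / (1 + s)\<^sup>2 + g / (1 + a)\<^sup>2) - (1 - (1 + b) / (1 + s))
      = t * (g\<^sup>2 * X1 + g * X2 - X3)"
  proof -
    have "g\<^sup>2 * (1 - (1 + s) / (1 + a)) + t * (1 / (1 + s)\<^sup>2 + g / (1 + a)\<^sup>2) - (1 - (1 + b) / (1 + s))
      = t * (g\<^sup>2 * X1 + g * X2 - X3) + t * (g\<^sup>2 / (2 * s * (1 + s)) + 1 / (1 + s)\<^sup>2 + g / (1 + s)\<^sup>2 - 1 / (2 * s * (1 + s)))"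
      unfolding W1 W2 X1_def X2_def X3_def by (simp add: algebra_simps)
    then show ?thesis using Z by simp
  qed
  have g0: "0 \<le> g" "g \<le> 1" unfolding g_def using s by auto
  have X1b: "\<bar>X1\<bar> \<le> t / (2 * s ^ 3)"
  proof -
    have X1e: "X1 = - (d1 * (1 + a + 2 * s)) / ((a + s) * (1 + a) * (2 * s * (1 + s)))"
    proof -
      have "X1 = (2 * s * (1 + s) - (a + s) * (1 + a)) / (((a + s) * (1 + a)) * (2 * s * (1 + s)))"
        unfolding X1_def using s a0 as by (intro inv_diff) auto
      also have "2 * s * (1 + s) - (a + s) * (1 + a) = - (d1 * (1 + a + 2 * s))"
        unfolding d1_def by (simp add: algebra_simps)
      finally show ?thesis by simp
    qed
    have den: "(a + s) * (1 + a) * (2 * s * (1 + s)) \<ge> 4 * s\<^sup>2"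
    proof -
      have "(a + s) * (1 + a) \<ge> 2 * s * 1" using as a0 s by (intro mult_mono) auto
      moreover have "2 * s * (1 + s) \<ge> 2 * s * 1" using s by auto
      ultimately have "(a + s) * (1 + a) * (2 * s * (1 + s)) \<ge> (2 * s * 1) * (2 * s * 1)"
        using s as a0 by (intro mult_mono) auto
      then show ?thesis by (simp add: power2_eq_square)
    qed
    have num: "d1 * (1 + a + 2 * s) \<le> (t / (2 * s)) * 4"
      using d1b d1p a1 a0 s by (intro mult_mono) auto
    have "\<bar>X1\<bar> = (d1 * (1 + a + 2 * s)) / ((a + s) * (1 + a) * (2 * s * (1 + s)))"
      unfolding X1e using d1p a0 s by simp
    also have "\<dots> \<le> ((t / (2 * s)) * 4) / (4 * s\<^sup>2)"
      using num den d1p a0 s t by (intro frac_le) auto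
    also have "\<dots> = t / (2 * s ^ 3)" using s by (simp add: field_simps power2_eq_square power3_eq_cube)
    finally show ?thesis .
  qed
  have X2b: "\<bar>X2\<bar> \<le> 2 * t / s ^ 3"
  proof -
    have X2e: "X2 = - (d1 * (2 + a + s)) / ((1 + a)\<^sup>2 * (1 + s)\<^sup>2)"
    proof -
      have "X2 = ((1 + s)\<^sup>2 - (1 + a)\<^sup>2) / ((1 + a)\<^sup>2 * (1 + s)\<^sup>2)"
        unfolding X2_def using s a0 by (intro inv_diff) auto
      also have "(1 + s)\<^sup>2 - (1 + a)\<^sup>2 = - (d1 * (2 + a + s))"
        unfolding d1_def by (simp add: algebra_simps power2_eq_square)
      finally show ?thesis by simp
    qed
    have "\<bar>X2\<bar> = (d1 * (2 + a + s)) / ((1 + a)\<^sup>2 * (1 + s)\<^sup>2)"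
      unfolding X2e using d1p a0 s by simp
    also have "\<dots> \<le> (d1 * (2 + a + s)) / 1"
    proof (rule divide_left_mono)
      have "1 * 1 \<le> (1 + a)\<^sup>2 * (1 + s)\<^sup>2"
        by (rule mult_mono) (use a0 s in \<open>auto intro: one_le_power\<close>)
      then show "1 \<le> (1 + a)\<^sup>2 * (1 + s)\<^sup>2" by simp
    qed (use d1p a0 s in auto)
    also have "\<dots> \<le> (t / (2 * s)) * 4" using d1b d1p a1 a0 s by (simp only: div_by_1, intro mult_mono) auto
    also have "\<dots> \<le> 2 * t / s ^ 3"
    proof -
      have "s ^ 3 \<le> s" using s by (simp add: power_le_one mult_le_cancel_left1 power3_eq_cube)
        (smt (verit) mult_le_one mult_nonneg_nonneg)
      then have "2 * t / s \<le> 2 * t / s ^ 3" using s t by (intro divide_left_mono) auto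
      then show ?thesis using s by (simp add: field_simps)
    qed
    finally show ?thesis .
  qed
  have X3b: "\<bar>X3\<bar> \<le> t / (2 * s ^ 3)"
  proof -
    have X3e: "X3 = d2 / (2 * s * (s + b) * (1 + s))"
    proof -
      have "X3 = (2 * s * (1 + s) - (s + b) * (1 + s)) / (((s + b) * (1 + s)) * (2 * s * (1 + s)))"
        unfolding X3_def using s b by (intro inv_diff) auto
      also have "2 * s * (1 + s) - (s + b) * (1 + s) = (1 + s) * d2"
        unfolding d2_def by (simp add: algebra_simps)
      also have "((s + b) * (1 + s)) * (2 * s * (1 + s)) = (1 + s) * (2 * s * (s + b) * (1 + s))"
        by (simp add: algebra_simps)
      finally show ?thesis using s by simp
    qed
    have "\<bar>X3\<bar> = d2 / (2 * s * (s + b) * (1 + s))"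
      unfolding X3e using d1p b s by simp
    also have "\<dots> \<le> (t / s) / (2 * s * s * 1)"
      using d2b d1p b s by (intro frac_le mult_mono) auto
    also have "\<dots> = t / (2 * s ^ 3)" using s by (simp add: field_simps power3_eq_cube)
    finally show ?thesis .
  qed
  have "\<bar>g\<^sup>2 * X1 + g * X2 - X3\<bar> \<le> g\<^sup>2 * \<bar>X1\<bar> + g * \<bar>X2\<bar> + \<bar>X3\<bar>"
  proof -
    have h1: "\<bar>g\<^sup>2 * X1\<bar> = g\<^sup>2 * \<bar>X1\<bar>" by (simp add: abs_mult)
    have h2: "\<bar>g * X2\<bar> = g * \<bar>X2\<bar>" using g0 by (simp add: abs_mult)
    show ?thesis using h1 h2 by linarith
  qed
  also have "\<dots> \<le> 1 * (t / (2 * s ^ 3)) + 1 * (2 * t / s ^ 3) + t / (2 * s ^ 3)"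
    using g0 X1b X2b X3b by (intro add_mono mult_mono) (auto simp: power_le_one)
  also have "\<dots> = 3 * t / s ^ 3" by (simp add: field_simps)
  finally have "\<bar>g\<^sup>2 * X1 + g * X2 - X3\<bar> \<le> 3 * t / s ^ 3" .
  then have "t * \<bar>g\<^sup>2 * X1 + g * X2 - X3\<bar> \<le> t * (3 * t / s ^ 3)" using t by (intro mult_left_mono) auto
  then show ?thesis unfolding E using t by (simp add: abs_mult power2_eq_square mult.commute mult.left_commute)
qed


primrec QQ :: "(nat \<Rightarrow> real) \<Rightarrow> real \<Rightarrow> nat \<Rightarrow> real" where
  "QQ g w 0 = w"
| "QQ g w (Suc k) = (if Suc k \<le> 2 then w else (g (Suc k))\<^sup>2 * QQ g w k)"

lemma rec_bound:
  fixes s :: "nat \<Rightarrow> real" and V :: "nat \<Rightarrow> real" and t :: real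
  assumes t: "0 < t" "t \<le> 1/3" and N: "3 \<le> N"
   and s1: "s 1 = 1"
   and sp: "\<And>j. 1 \<le> j \<Longrightarrow> j \<le> N \<Longrightarrow> 0 < s j \<and> s j \<le> 1"
   and ss: "\<And>j. 2 \<le> j \<Longrightarrow> j \<le> N \<Longrightarrow> (s (j-1))\<^sup>2 = (s j)\<^sup>2 + t"
   and V2: "V 2 = 0"
   and Vs: "\<And>j. 3 \<le> j \<Longrightarrow> j \<le> N \<Longrightarrow> V j = ((1 - s j)/(1 + s j))\<^sup>2 * V (j-1)
              + t * (1/(1 + s j)\<^sup>2 + ((1 - s j)/(1 + s j))/(1 + s (j-1))\<^sup>2)"
   and i: "3 \<le> i" "i \<le> N"
  shows "\<bar>(1 - s i)/(1 + s i) * V (i-1) - ((1 - s i)/(1 + s i) - (1 - s i)/(1 + s (i-1)))\<bar> \<le> 7 * t\<^sup>2 / (s i)^4"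
proof -
  define g where "g j = (1 - s j)/(1 + s j)" for j
  define W where "W j = 1 - (1 + s (j+1))/(1 + s j)" for j
  define F where "F j = V j - W j + QQ g (W 2) j" for j
  have g01: "0 \<le> g j \<and> g j \<le> 1" if "1 \<le> j" "j \<le> N" for j
    using sp[OF that] by (auto simp: g_def)
  have smono: "s (j+1) \<le> s j" if "1 \<le> j" "j + 1 \<le> N" for j
  proof -
    have "(s j)\<^sup>2 = (s (j+1))\<^sup>2 + t" using ss[of "j+1"] that by simp
    then have "(s (j+1))\<^sup>2 \<le> (s j)\<^sup>2" using t by simp
    then show ?thesis using sp[of j] sp[of "j+1"] that power2_le_imp_le[of "s (j+1)" "s j"] by simp
  qed
  have Frec: "F j = (g j)\<^sup>2 * F (j-1) + ((g j)\<^sup>2 * W (j-1) + t * (1/(1 + s j)\<^sup>2 + g j/(1 + s (j-1))\<^sup>2) - W j)"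
    if "3 \<le> j" "j \<le> N" for j
  proof -
    have Q: "QQ g (W 2) j = (g j)\<^sup>2 * QQ g (W 2) (j-1)"
      using that by (cases j) auto
    have "j - 1 + 1 = j" using that by simp
    then show ?thesis unfolding F_def Q Vs[OF that] using that
      by (simp add: g_def algebra_simps)
  qed
  have F2: "F 2 = 0" unfolding F_def using V2 by (simp add: numeral_2_eq_2)
  have FA: "\<bar>F j\<bar> \<le> 3 * t\<^sup>2 / (s (j+1))^4" if "2 \<le> j" "j + 1 \<le> N" for j
    using that
  proof (induction j rule: dec_induct)
    case base
    then show ?case using F2 t by simp
  next
    case (step j)
    have j3: "3 \<le> Suc j" "Suc j \<le> N" using step by auto
    have sj: "0 < s (Suc j)" "s (Suc j) \<le> 1" using sp[of "Suc j"] j3 by auto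
    have sa: "0 < s j" "s j \<le> 1" using sp[of j] step by auto
    have sb: "0 < s (Suc j + 1)" "s (Suc j + 1) \<le> 1" using sp[of "Suc j + 1"] step by auto
    have ha: "(s j)\<^sup>2 = (s (Suc j))\<^sup>2 + t" using ss[of "Suc j"] j3 by simp
    have hb: "(s (Suc j + 1))\<^sup>2 = (s (Suc j))\<^sup>2 - t" using ss[of "Suc j + 1"] step by simp
    have eb: "\<bar>(g (Suc j))\<^sup>2 * W j + t * (1/(1 + s (Suc j))\<^sup>2 + g (Suc j)/(1 + s j)\<^sup>2) - W (Suc j)\<bar>
       \<le> 3 * t\<^sup>2 / s (Suc j) ^ 3"
      using e_bound[OF t(1) sj sb(1) sa(2) _ ha hb] sa unfolding g_def W_def by simp
    have IH: "\<bar>F j\<bar> \<le> 3 * t\<^sup>2 / (s (Suc j))^4" using step by simp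
    have gg: "(g (Suc j))\<^sup>2 + s (Suc j) \<le> 1"
    proof -
      define x where "x = s (Suc j)"
      have x: "0 < x" "x \<le> 1" using sj by (auto simp: x_def)
      have "((1 - x)/(1 + x))\<^sup>2 + x \<le> 1 \<longleftrightarrow> (1 - x)\<^sup>2 + x * (1 + x)\<^sup>2 \<le> (1 + x)\<^sup>2"
        using x by (simp add: power_divide field_simps)
      moreover have "(1 - x)\<^sup>2 + x * (1 + x)\<^sup>2 \<le> (1 + x)\<^sup>2"
      proof -
        have "(1 + x)\<^sup>2 - ((1 - x)\<^sup>2 + x * (1 + x)\<^sup>2) = x * (3 - 2 * x - x\<^sup>2)"
          by (simp add: power2_eq_square algebra_simps)
        moreover have "3 - 2 * x - x\<^sup>2 \<ge> 0"
        proof -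
          have "x * x \<le> x" using x by (intro mult_left_le_one_le) auto
          then show ?thesis unfolding power2_eq_square using x by linarith
        qed
        ultimately show ?thesis using x mult_nonneg_nonneg[of x "3 - 2 * x - x\<^sup>2"] by linarith
      qed
      ultimately show ?thesis unfolding g_def x_def[symmetric] by simp
    qed
    have "\<bar>F (Suc j)\<bar> \<le> (g (Suc j))\<^sup>2 * \<bar>F j\<bar> + 3 * t\<^sup>2 / s (Suc j) ^ 3"
    proof -
      have "\<bar>(g (Suc j))\<^sup>2 * F j\<bar> = (g (Suc j))\<^sup>2 * \<bar>F j\<bar>" by (simp add: abs_mult)
      then show ?thesis using Frec[OF j3] eb by simp
    qed
    also have "\<dots> \<le> (g (Suc j))\<^sup>2 * (3 * t\<^sup>2 / (s (Suc j))^4) + 3 * t\<^sup>2 / s (Suc j) ^ 3"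
      using IH by (intro add_right_mono mult_left_mono) auto
    also have "\<dots> = (3 * t\<^sup>2 / (s (Suc j))^4) * ((g (Suc j))\<^sup>2 + s (Suc j))"
    proof -
      have e4: "(s (Suc j))^4 = (s (Suc j))^3 * s (Suc j)" by (simp add: eval_nat_numeral)
      have "3 * t\<^sup>2 / s (Suc j) ^ 3 = (3 * t\<^sup>2 / (s (Suc j))^4) * s (Suc j)"
        unfolding e4 using sj by (simp add: field_simps)
      then show ?thesis by (simp add: algebra_simps add_divide_distrib)
    qed
    also have "\<dots> \<le> (3 * t\<^sup>2 / (s (Suc j))^4) * 1"
      using gg sj by (intro mult_left_mono) auto
    also have "\<dots> \<le> 3 * t\<^sup>2 / (s (Suc j + 1))^4"
    proof -
      have "s (Suc j + 1) \<le> s (Suc j)" using smono[of "Suc j"] step by simp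
      then have "(s (Suc j + 1))^4 \<le> (s (Suc j))^4" using sb by (intro power_mono) auto
      then show ?thesis using sb sj t by (simp, intro divide_left_mono) auto
    qed
    finally show ?case by simp
  qed
  have s2: "s 2 \<ge> 1/2"
  proof -
    have "(s 2)\<^sup>2 = 1 - t" using ss[of 2] N s1 by simp
    then have "(s 2)\<^sup>2 \<ge> (1/2)\<^sup>2" using t by (simp add: power2_eq_square)
    then show ?thesis using sp[of 2] N power2_le_imp_le[of "1/2" "s 2"] by simp
  qed
  have W2: "0 \<le> W 2" "W 2 \<le> 2 * t"
  proof -
    have s3: "s 3 \<le> s 2" using smono[of 2] N by simp
    have p2: "0 < s 2" "0 < s 3" using sp[of 2] sp[of 3] N by auto
    have e23: "(2::nat) + 1 = 3" by simp
    have W2e: "W 2 = 1 - (1 + s 3) / (1 + s 2)" unfolding W_def e23 ..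
    show "0 \<le> W 2" unfolding W2e using s3 p2 by (simp add: field_simps)
    have "(s 2)\<^sup>2 = (s 3)\<^sup>2 + t" using ss[of 3] N by simp
    then have "(s 2 - s 3) * (s 2 + s 3) = t" by (simp add: power2_eq_square algebra_simps)
    moreover have "(s 2 - s 3) * (1/2) \<le> (s 2 - s 3) * (s 2 + s 3)" using s3 p2 s2
      by (intro mult_left_mono) auto
    ultimately have "(s 2 - s 3) * (1/2) \<le> t" by simp
    then have d: "s 2 - s 3 \<le> 2 * t" by simp
    have "W 2 = (s 2 - s 3) / (1 + s 2)" unfolding W2e using p2 by (simp add: field_simps)
    also have "\<dots> \<le> s 2 - s 3"
    proof -
      have "(s 2 - s 3) * 1 \<le> (s 2 - s 3) * (1 + s 2)" using s3 p2 by (intro mult_left_mono) auto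
      then show ?thesis using p2 by (simp add: divide_le_eq)
    qed
    finally show "W 2 \<le> 2 * t" using d by simp
  qed
  have g3: "g 3 \<le> 2 * t"
  proof -
    have "(s 2)\<^sup>2 = (s 3)\<^sup>2 + t" using ss[of 3] N by simp
    moreover have "(s 2)\<^sup>2 = 1 - t" using ss[of 2] N s1 by simp
    ultimately have e: "(s 3)\<^sup>2 = 1 - 2 * t" by simp
    have p: "0 < s 3" "s 3 \<le> 1" using sp[of 3] N by auto
    then have "(s 3)\<^sup>2 \<le> s 3" by (simp add: power2_eq_square mult_le_cancel_right1)
    then have "1 - s 3 \<le> 2 * t" using e by simp
    moreover have "g 3 \<le> 1 - s 3"
    proof -
      have "(1 - s 3) * 1 \<le> (1 - s 3) * (1 + s 3)" using p by (intro mult_left_mono) auto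
      then show ?thesis unfolding g_def using p by (simp add: divide_le_eq)
    qed
    ultimately show ?thesis by simp
  qed
  have Qb: "0 \<le> QQ g (W 2) k \<and> QQ g (W 2) k \<le> g 3 * W 2" if "3 \<le> k" "k \<le> N" for k
    using that
  proof (induction k rule: dec_induct)
    case base
    have "QQ g (W 2) 3 = (g 3)\<^sup>2 * W 2" by (simp add: numeral_3_eq_3)
    moreover have "(g 3)\<^sup>2 * W 2 \<le> g 3 * W 2" using g01[of 3] N W2 
      by (intro mult_right_mono) (auto simp: power2_eq_square intro: mult_right_le_one_le)
    ultimately show ?case using W2 by simp
  next
    case (step k)
    have "QQ g (W 2) (Suc k) = (g (Suc k))\<^sup>2 * QQ g (W 2) k" using step by simp
    moreover have "0 \<le> (g (Suc k))\<^sup>2" "(g (Suc k))\<^sup>2 \<le> 1" using g01[of "Suc k"] step by (auto simp: power_le_one)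
    moreover have "(g (Suc k))\<^sup>2 * QQ g (W 2) k \<le> QQ g (W 2) k"
      using step \<open>(g (Suc k))\<^sup>2 \<le> 1\<close> \<open>0 \<le> (g (Suc k))\<^sup>2\<close> by (intro mult_left_le_one_le) auto
    moreover have "0 \<le> (g (Suc k))\<^sup>2 * QQ g (W 2) k"
      using step \<open>0 \<le> (g (Suc k))\<^sup>2\<close> by (intro mult_nonneg_nonneg) auto
    ultimately show ?case using step by linarith
  qed
  have gQ: "0 \<le> g i * QQ g (W 2) (i-1) \<and> g i * QQ g (W 2) (i-1) \<le> 4 * t\<^sup>2"
  proof (cases "i = 3")
    case True
    have "QQ g (W 2) (i - 1) = W 2" using True by (simp add: numeral_2_eq_2)
    moreover have "g 3 * W 2 \<le> (2 * t) * (2 * t)" using g3 W2 g01[of 3] N by (intro mult_mono) auto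
    ultimately show ?thesis using True W2 g01[of 3] N by (simp add: power2_eq_square)
  next
    case False
    then have i3: "3 \<le> i - 1" using i by simp
    have iN: "i - 1 \<le> N" using i by simp
    note q = Qb[OF i3 iN]
    have "g 3 * W 2 \<le> (2 * t) * (2 * t)" using g3 W2 g01[of 3] N by (intro mult_mono) auto
    moreover have "g i * QQ g (W 2) (i-1) \<le> QQ g (W 2) (i-1)" using g01[of i] i q by (simp add: mult_left_le_one_le)
    ultimately show ?thesis using g01[of i] i q by (simp add: power2_eq_square)
  qed
  have si: "0 < s i" "s i \<le> 1" using sp[of i] i by auto
  have key: "(1 - s i)/(1 + s i) * V (i-1) - ((1 - s i)/(1 + s i) - (1 - s i)/(1 + s (i-1)))
      = g i * F (i-1) - g i * QQ g (W 2) (i-1)"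
  proof -
    have p: "0 < s (i-1)" using sp[of "i-1"] i by auto
    have ii: "i - 1 + 1 = i" using i by simp
    have We: "W (i-1) = 1 - (1 + s i)/(1 + s (i-1))" unfolding W_def ii ..
    have "(1 - s i)/(1 + s i) - (1 - s i)/(1 + s (i-1)) = g i * W (i-1)"
      unfolding We g_def using p si by (simp add: field_simps)
    then show ?thesis unfolding F_def g_def[symmetric] by (simp add: algebra_simps)
  qed
  have Fi: "\<bar>F (i-1)\<bar> \<le> 3 * t\<^sup>2 / (s i)^4" using FA[of "i-1"] i by simp
  have "\<bar>g i * F (i-1) - g i * QQ g (W 2) (i-1)\<bar> \<le> g i * \<bar>F (i-1)\<bar> + g i * QQ g (W 2) (i-1)"
  proof -
    have "\<bar>g i * F (i-1)\<bar> = g i * \<bar>F (i-1)\<bar>" using g01[of i] i by (simp add: abs_mult)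
    then show ?thesis using gQ by linarith
  qed
  also have "\<dots> \<le> 1 * (3 * t\<^sup>2 / (s i)^4) + 4 * t\<^sup>2"
  proof -
    have "g i * \<bar>F (i-1)\<bar> \<le> 1 * (3 * t\<^sup>2 / (s i)^4)"
      using g01[of i] i Fi by (intro mult_mono) auto
    then show ?thesis using gQ by linarith
  qed
  also have "\<dots> \<le> 3 * t\<^sup>2 / (s i)^4 + 4 * t\<^sup>2 / (s i)^4"
  proof -
    have "(s i)^4 \<le> 1" using si by (simp add: power_le_one)
    then have "4 * t\<^sup>2 \<le> 4 * t\<^sup>2 / (s i)^4" using si t by (simp add: le_divide_eq)
    then show ?thesis by simp
  qed
  also have "\<dots> = 7 * t\<^sup>2 / (s i)^4" by (simp add: field_simps)
  finally show ?thesis unfolding key .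
qed


theorem lemma10:
  fixes M :: "'a measure" and \<alpha> :: real and w :: "nat \<Rightarrow> real"
    and a b :: "nat \<Rightarrow> nat \<Rightarrow> 'a \<Rightarrow> real"
  assumes "prob_space M"
    and "\<alpha> > 0"
    and indep: "\<And>N. prob_space.indep_vars M (\<lambda>_. borel)
          (\<lambda>k. case k of Inl i \<Rightarrow> a N i | Inr i \<Rightarrow> b N i)
          (Inl ` {1..N} \<union> Inr ` {1..N - 1})"
    and a_distr: "\<And>N i. 1 \<le> i \<Longrightarrow> i \<le> N \<Longrightarrow>
          distributed M lborel (a N i) (\<lambda>x. ennreal (normal_density 0 (sqrt \<alpha>) x))"
    and b_nonneg: "\<And>N i \<omega>. 1 \<le> i \<Longrightarrow> i \<le> N - 1 \<Longrightarrow> \<omega> \<in> space M \<Longrightarrow> b N i \<omega> \<ge> 0"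
    and b_distr: "\<And>N i. 1 \<le> i \<Longrightarrow> i \<le> N - 1 \<Longrightarrow>
          distributed M lborel (\<lambda>\<omega>. (2 / \<alpha>) * (b N i \<omega>)\<^sup>2)
            (\<lambda>x. ennreal (chi2_density (2 * real i / \<alpha>) x))"
    and w_pos: "\<And>N. w N > 0"
    and w_lim1: "((\<lambda>N. (ln (ln (real N)))\<^sup>2 / w N) \<longlongrightarrow> 0) sequentially"
    and w_lim2: "((\<lambda>N. w N / (ln (real N))\<^sup>2) \<longlongrightarrow> 0) sequentially"
  shows "\<exists>C>0. \<forall>N i. 3 \<le> i \<and> i \<le> N \<longrightarrow>
           \<bar>gam (theta w N) N i
              * prob_space.expectation M (\<lambda>\<omega>. (LL (a N) (b N) (theta w N) N (i - 1) \<omega>)\<^sup>2) / \<alpha>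
            - dlt (theta w N) N i\<bar>
           < C / ((real N)\<^sup>2 * (rr (theta w N) N i - 1) ^ 4)"
proof -
  interpret prob_space M by fact
  have main: "\<bar>gam (theta w N) N i
              * prob_space.expectation M (\<lambda>\<omega>. (LL (a N) (b N) (theta w N) N (i - 1) \<omega>)\<^sup>2) / \<alpha>
            - dlt (theta w N) N i\<bar>
           < 8 / ((real N)\<^sup>2 * (rr (theta w N) N i - 1) ^ 4)" if i: "3 \<le> i" "i \<le> N" for N i
  proof -
    define th where "th = theta w N"
    have N3: "3 \<le> N" using i by simp
    have th1: "th > 1"
    proof -
      have "real N powr (-2/3) > 0" using N3 by simp
      then show ?thesis unfolding th_def theta_def using w_pos[of N] by simp
    qed
    define t where "t = 1 / (real N * th\<^sup>2)"
    have Nth: "real N \<le> real N * th\<^sup>2"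
    proof -
      have "1 \<le> th\<^sup>2" using th1 by (simp add: one_le_power)
      then show ?thesis using N3 by (simp add: mult_le_cancel_left1)
    qed
    have Npos: "real N * th\<^sup>2 > 0" using N3 th1 by simp
    have t0: "t > 0" unfolding t_def using Npos by simp
    have tN: "t \<le> 1 / real N" unfolding t_def using Nth N3 Npos by (intro divide_left_mono) auto
    have t3: "t \<le> 1/3"
    proof -
      have "1 / real N \<le> 1 / 3" using N3 by (intro divide_left_mono) auto
      then show ?thesis using tN by simp
    qed
    define s where "s j = sqrt (1 - (real j - 1) / (real N * th\<^sup>2))" for j :: nat
    have rr_s: "rr th N j = 1 + s j" for j unfolding rr_def s_def ..
    have mm_s: "mm th N j = 1 - s j" for j unfolding mm_def s_def ..
    have gam_s: "gam th N j = (1 - s j) / (1 + s j)" for j unfolding gam_def rr_s mm_s ..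
    have s1: "s 1 = 1" unfolding s_def by simp
    have sp: "0 < s j \<and> s j \<le> 1" if "1 \<le> j" "j \<le> N" for j
    proof -
      have "real j - 1 < real N * th\<^sup>2" using that Nth by linarith
      then have "(real j - 1) / (real N * th\<^sup>2) < 1" using Npos by (simp add: divide_less_eq)
      moreover have "(real j - 1) / (real N * th\<^sup>2) \<ge> 0" using that Npos by simp
      ultimately show ?thesis unfolding s_def by simp
    qed
    have ss: "(s (j-1))\<^sup>2 = (s j)\<^sup>2 + t" if "2 \<le> j" "j \<le> N" for j
    proof -
      have a1: "0 \<le> 1 - (real (j-1) - 1) / (real N * th\<^sup>2)" using sp[of "j-1"] that
      proof -
        have "0 < s (j-1)" using sp[of "j-1"] that by auto
        then show ?thesis unfolding s_def by simp
      qed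
      have a2: "0 \<le> 1 - (real j - 1) / (real N * th\<^sup>2)" using sp[of j] that
      proof -
        have "0 < s j" using sp[of j] that by auto
        then show ?thesis unfolding s_def by simp
      qed
      have "(s (j-1))\<^sup>2 = 1 - (real (j-1) - 1) / (real N * th\<^sup>2)" unfolding s_def using a1 by simp
      also have "\<dots> = 1 - (real j - 1) / (real N * th\<^sup>2) + t"
      proof -
        have rj: "real (j-1) = real j - 1" using that by (simp add: of_nat_diff)
        have "(real (j-1) - 1) / (real N * th\<^sup>2) = (real j - 1) / (real N * th\<^sup>2) - t"
          unfolding rj t_def by (simp add: diff_divide_distrib)
        then show ?thesis by simp
      qed
      also have "\<dots> = (s j)\<^sup>2 + t" unfolding s_def using a2 by simp
      finally show ?thesis .
    qed
    have V2: "VV th N 2 = 0" by (simp add: numeral_2_eq_2)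
    have Vs: "VV th N j = ((1 - s j)/(1 + s j))\<^sup>2 * VV th N (j-1)
              + t * (1/(1 + s j)\<^sup>2 + ((1 - s j)/(1 + s j))/(1 + s (j-1))\<^sup>2)" if "3 \<le> j" "j \<le> N" for j
    proof -
      have jj: "3 \<le> j" using that by simp
      obtain k where k: "j = Suc k" using jj by (cases j) auto
      have pj: "0 < s j" "s j \<le> 1" using sp[of j] that by auto
      have pk: "0 < s k" using sp[of k] that k by auto
      have sq: "(sqrt (real N))\<^sup>2 = real N" by simp
      have e1: "(1 / (sqrt (real N) * th * rr th N (Suc k)))\<^sup>2 = t / (1 + s j)\<^sup>2"
        unfolding rr_s k[symmetric] t_def power_divide power_mult_distrib sq by simp
      have mr: "0 \<le> mm th N (Suc k) / rr th N (Suc k)" unfolding mm_s rr_s using pj k by simp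
      have e2: "(sqrt (mm th N (Suc k) / rr th N (Suc k)) / (sqrt (real N) * th * rr th N k))\<^sup>2
          = t * (((1 - s j)/(1 + s j))/(1 + s (j-1))\<^sup>2)"
      proof -
        have sq2: "(sqrt (mm th N (Suc k) / rr th N (Suc k)))\<^sup>2 = mm th N (Suc k) / rr th N (Suc k)" using mr by simp
        have kk: "Suc k - 1 = k" by simp
        show ?thesis unfolding power_divide power_mult_distrib sq sq2 unfolding mm_s rr_s k kk t_def
          by simp
      qed
      have "VV th N j = (gam th N (Suc k))\<^sup>2 * VV th N k
         + (1 / (sqrt (real N) * th * rr th N (Suc k)))\<^sup>2
         + (sqrt (mm th N (Suc k) / rr th N (Suc k)) / (sqrt (real N) * th * rr th N k))\<^sup>2"
        using that k by simp
      also have "\<dots> = ((1 - s j)/(1 + s j))\<^sup>2 * VV th N (j-1)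
              + t * (1/(1 + s j)\<^sup>2 + ((1 - s j)/(1 + s j))/(1 + s (j-1))\<^sup>2)"
        unfolding e1 e2 gam_s using k by (simp add: algebra_simps)
      finally show ?thesis .
    qed
    have rb: "\<bar>(1 - s i)/(1 + s i) * VV th N (i-1) - ((1 - s i)/(1 + s i) - (1 - s i)/(1 + s (i-1)))\<bar> \<le> 7 * t\<^sup>2 / (s i)^4"
      by (rule rec_bound[of t N s "VV th N" i, OF t0 t3 N3 s1 sp ss V2 Vs i])
    have EL: "prob_space.expectation M (\<lambda>\<omega>. (LL (a N) (b N) th N (i - 1) \<omega>)\<^sup>2) = \<alpha> * VV th N (i-1)"
      using LL_moments[of M \<alpha> "a N" "b N" N "i-1" th, OF assms(1,2) indep[of N] a_distr b_distr] i by auto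
    have lhs: "gam th N i * prob_space.expectation M (\<lambda>\<omega>. (LL (a N) (b N) th N (i - 1) \<omega>)\<^sup>2) / \<alpha> - dlt th N i
       = (1 - s i)/(1 + s i) * VV th N (i-1) - ((1 - s i)/(1 + s i) - (1 - s i)/(1 + s (i-1)))"
      unfolding EL dlt_def gam_s mm_s rr_s using assms(2) by simp
    have si: "0 < s i" "s i \<le> 1" using sp[of i] i by auto
    have "7 * t\<^sup>2 / (s i)^4 \<le> 7 * (1 / real N)\<^sup>2 / (s i)^4"
      using t0 tN si by (intro divide_right_mono mult_left_mono power_mono) auto
    also have "\<dots> = 7 / ((real N)\<^sup>2 * (s i)^4)" by (simp add: power_divide)
    also have "\<dots> < 8 / ((real N)\<^sup>2 * (s i)^4)" using si N3 by (intro divide_strict_right_mono) auto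
    finally have "\<bar>gam th N i * prob_space.expectation M (\<lambda>\<omega>. (LL (a N) (b N) th N (i - 1) \<omega>)\<^sup>2) / \<alpha> - dlt th N i\<bar>
       < 8 / ((real N)\<^sup>2 * (rr th N i - 1) ^ 4)"
      using rb unfolding lhs rr_s by simp
    then show ?thesis unfolding th_def .
  qed
  show ?thesis
  proof (intro exI[of _ "8::real"] conjI allI impI)
    fix N i :: nat
    assume hi: "3 \<le> i \<and> i \<le> N"
    show "\<bar>gam (theta w N) N i
              * prob_space.expectation M (\<lambda>\<omega>. (LL (a N) (b N) (theta w N) N (i - 1) \<omega>)\<^sup>2) / \<alpha>
            - dlt (theta w N) N i\<bar>
           < 8 / ((real N)\<^sup>2 * (rr (theta w N) N i - 1) ^ 4)" using hi by (intro main) auto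
  qed simp
qed

end
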